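(* Let $0<q<1$, $x\in\mathbb{C}$ and integers $m\ge n\ge 0$. Then $$\mathcal{P}_n^{(1/4,1/4)}\big(x;q^{m-n}\,\big|\,q\big)=\frac{(q;q)_n}{(q^{m-n+1};q)_n}\,L_n^{(m-n)}\big(x\,q^{-(m+n+1)/2};q\big),$$ where $L_n^{(\rho)}(y;q)$ is the $q$-Laguerre polynomial.
   Context: $(a;q)_0=1$, $(a;q)_k=\prod_{j=0}^{k-1}(1-aq^j)$. For a nonnegative integer $\gamma$ and real $\mu,\nu$, $\mathcal{P}_n^{(\mu,\nu)}(x;q^\gamma|q)=\sum_{k=0}^n\frac{q^{k^2(\mu+\nu)+2\nu\gamma k}(q^{-n};q)_k}{(q;q)_k(q^{\gamma+1};q)_k}x^k$. The $q$-Laguerre polynomials are $$L_n^{(\rho)}(y;q)=\frac{(q^{\rho+1};q)_n}{(q;q)_n}\,{}_1\phi_1\big(q^{-n};q^{\rho+1};q;-y\,q^{n+\rho+1}\big),\qquad {}_1\phi_1(a;b;q;w)=\sum_{k\ge0}\frac{(a;q)_k}{(q;q)_k(b;q)_k}(-1)^kq^{k(k-1)/2}w^k.$$ *)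

theory Defs
  imports Complex_Main
begin

definition qpoch :: "real \<Rightarrow> real \<Rightarrow> nat \<Rightarrow> real" where
  "qpoch a q k = (\<Prod>j<k. 1 - a * q ^ j)"

definition Ppoly :: "real \<Rightarrow> real \<Rightarrow> nat \<Rightarrow> nat \<Rightarrow> real \<Rightarrow> complex \<Rightarrow> complex" where
  "Ppoly \<mu> \<nu> n \<gamma> q x =
     (\<Sum>k=0..n. complex_of_real
        (q powr (real k ^ 2 * (\<mu> + \<nu>) + 2 * \<nu> * real \<gamma> * real k)
         * qpoch (q powr (- real n)) q k / (qpoch q q k * qpoch (q ^ (\<gamma> + 1)) q k))
        * x ^ k)"

definition phi11 :: "real \<Rightarrow> real \<Rightarrow> real \<Rightarrow> complex \<Rightarrow> complex" where
  "phi11 a b q w =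
     (\<Sum>k. complex_of_real (qpoch a q k / (qpoch q q k * qpoch b q k))
           * (-1) ^ k * complex_of_real (q ^ (k * (k - 1) div 2)) * w ^ k)"

definition qLaguerre :: "nat \<Rightarrow> real \<Rightarrow> complex \<Rightarrow> real \<Rightarrow> complex" where
  "qLaguerre n \<rho> y q =
     complex_of_real (qpoch (q powr (\<rho> + 1)) q n / qpoch q q n)
     * phi11 (q powr (- real n)) (q powr (\<rho> + 1)) q
         (- y * complex_of_real (q powr (real n + \<rho> + 1)))"

end

theory Submission
  imports Defs
begin

lemma qpoch_zero:
  assumes "0 < q" "n < k"
  shows "qpoch (q powr (- real n)) q k = 0"
proof -
  have "n \<in> {..<k}" using assms by auto
  moreover have "1 - q powr (- real n) * q ^ n = 0"
    using assms by (simp add: powr_minus powr_realpow field_simps)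
  ultimately show ?thesis unfolding qpoch_def
    by (meson finite_lessThan prod_zero)
qed

lemma qpoch_nz:
  assumes "0 < q" "q < 1" "0 < a" "a \<le> q"
  shows "qpoch a q k \<noteq> 0"
proof -
  have "a * q ^ j < 1" for j
  proof -
    have "q ^ j \<le> 1" using assms by (simp add: power_le_one)
    hence "a * q ^ j \<le> a" using assms by (simp add: mult_left_le)
    thus ?thesis using assms by linarith
  qed
  thus ?thesis unfolding qpoch_def by (simp add: prod_zero_iff) (smt (verit))
qed

lemma tri_pow:
  assumes "0 < q"
  shows "q ^ (k * (k - 1) div 2) = q powr (real k * (real k - 1) / 2)"
proof -
  have "even (k * (k - 1))" by (cases "even k") auto
  hence "k * (k - 1) = 2 * (k * (k - 1) div 2)" by simp
  hence "real (k * (k - 1)) = 2 * real (k * (k - 1) div 2)" by (metis of_nat_mult of_nat_numeral)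
  moreover have "real (k * (k - 1)) = real k * (real k - 1)"
    by (cases k) (auto simp: algebra_simps)
  ultimately have "real (k * (k - 1) div 2) = real k * (real k - 1) / 2" by simp
  thus ?thesis using assms by (metis powr_realpow)
qed

theorem mainTheorem3:
  fixes q :: real and x :: complex and m n :: nat
  assumes "0 < q" "q < 1" "n \<le> m"
  shows "Ppoly (1/4) (1/4) n (m - n) q x =
    complex_of_real (qpoch q q n / qpoch (q ^ (m - n + 1)) q n)
    * qLaguerre n (real (m - n)) (x * complex_of_real (q powr (- (real m + real n + 1) / 2))) q"
proof -
  define g where "g = m - n"
  have pg: "q powr (real (m - n) + 1) = q ^ (g + 1)"
  proof -
    have "real (m - n) + 1 = real (g + 1)" by (simp add: g_def)
    thus ?thesis using assms by (simp only: powr_realpow)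
  qed
  have A: "qpoch q q n \<noteq> 0" using assms by (intro qpoch_nz) auto
  have "q ^ (g+1) \<le> q" using assms by (simp add: power_le_one mult_left_le_one_le)
  hence B: "qpoch (q ^ (g+1)) q n \<noteq> 0" using assms by (intro qpoch_nz) auto
  define w where "w = - (x * complex_of_real (q powr (- (real m + real n + 1) / 2)))
       * complex_of_real (q powr (real n + real (m - n) + 1))"
  define f where "f = (\<lambda>k. complex_of_real (qpoch (q powr (- real n)) q k / (qpoch q q k * qpoch (q ^ (g+1)) q k))
           * (-1) ^ k * complex_of_real (q ^ (k * (k - 1) div 2)) * w ^ k)"
  have phi: "phi11 (q powr (- real n)) (q ^ (g+1)) q w = sum f {0..n}"
    unfolding phi11_def f_def
    by (rule suminf_finite) (auto simp: qpoch_zero[OF assms(1)])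
  have w: "w = - x * complex_of_real (q powr ((real g + 1)/2))"
  proof -
    have "q powr (- (real m + real n + 1) / 2) * q powr (real n + real (m - n) + 1) = q powr ((real g + 1)/2)"
      using assms by (simp add: powr_add[symmetric] g_def of_nat_diff field_simps)
    thus ?thesis unfolding w_def by (simp flip: of_real_mult)
  qed
  have trm: "f k = complex_of_real
        (q powr (real k ^ 2 * (1/4 + 1/4) + 2 * (1/4) * real g * real k)
         * qpoch (q powr (- real n)) q k / (qpoch q q k * qpoch (q ^ (g + 1)) q k)) * x ^ k" for k
  proof -
    have e: "q powr (real k * (real k - 1) / 2) * (q powr ((real g + 1)/2)) ^ k
       = q powr (real k ^ 2 * (1/4 + 1/4) + 2 * (1/4) * real g * real k)"
    proof -
      have "q powr (real k * (real k - 1) / 2) * (q powr ((real g + 1)/2)) ^ k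
         = q powr (real k * (real k - 1) / 2 + ((real g + 1)/2) * real k)"
        using assms by (simp add: powr_realpow[symmetric] powr_powr powr_add)
      also have "real k * (real k - 1) / 2 + ((real g + 1)/2) * real k
          = real k ^ 2 * (1/4 + 1/4) + 2 * (1/4) * real g * real k"
        by (simp add: field_simps power2_eq_square)
      finally show ?thesis .
    qed
    have pw: "w ^ k = (-1)^k * (x ^ k * complex_of_real (q powr ((real g + 1)/2)) ^ k)"
      unfolding w by (simp add: power_minus[of "x * _"] power_mult_distrib)
    have "f k = complex_of_real (qpoch (q powr (- real n)) q k / (qpoch q q k * qpoch (q ^ (g+1)) q k))
       * ((-1) ^ k * (-1) ^ k) * complex_of_real (q powr (real k * (real k - 1) / 2) * (q powr ((real g + 1)/2)) ^ k) * x ^ k"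
      unfolding f_def pw tri_pow[OF assms(1)] by (simp add: power_mult_distrib algebra_simps)
    also have "(-1::complex) ^ k * (-1) ^ k = 1" by (simp flip: power_add)
    finally show ?thesis unfolding e by simp
  qed
  show ?thesis
    unfolding qLaguerre_def pg phi[unfolded w_def] Ppoly_def
    using A B trm by (simp add: g_def w_def flip: of_real_mult)
qed

end
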